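(* Let $L=2$, assume $\min\{d_1\}\ge d_{\min}$ (i.e., $d_1\ge\min\{d_0,d_2\}$), and suppose $\lambda=y_i^2$ for some $i\in[r_Y]$. Then for every $\bm\sigma^*\in\mathcal A$, there do not exist constants $\epsilon,\kappa>0$ such that $\mathrm{dist}(\bm W,\widehat{\mathcal W}_{\bm\sigma^*})\le\kappa\|\nabla G(\bm W)\|_F$ holds for all $\bm W$ with $\mathrm{dist}(\bm W,\widehat{\mathcal W}_{\bm\sigma^*})\le\epsilon$.
   Context: Setting: $d_0,d_1,d_2$ positive integers, $d_{\min}=\min\{d_0,d_2\}$, $\lambda>0$, $\bm Y\in\mathbb R^{d_2\times d_0}$ diagonal with entries $y_1\ge\dots\ge y_{d_{\min}}\ge0$, $r_Y$ the number of positive $y_i$, $G(\bm W_1,\bm W_2)=\|\bm W_2\bm W_1-\sqrt\lambda\bm Y\|_F^2+\lambda(\|\bm W_1\|_F^2+\|\bm W_2\|_F^2)$. $\mathcal A=\{\bm a\in\mathbb R^{d_{\min}}:a_i^3-\sqrt\lambda y_ia_i+\lambda a_i=0,a_i\ge0\ \forall i\}$. For $\bm\sigma^*\in\mathcal A$, $\widehat{\mathcal W}_{\bm\sigma^*}:=\mathcal W_{\mathrm{sort}(\bm\sigma^* )}$, where $\mathrm{sort}$ rearranges entries in nonincreasing order and, for $\bm\sigma$ nonincreasing with $\bm\sigma=\bm\Pi\bm a$, $\bm a\in\mathcal A$, $\bm\Pi$ a permutation matrix, $\mathcal W_{\bm\sigma}$ is the set of pairs $\bm W_1=\bm Q_2\bm\Sigma_1\mathrm{BlkD}(\bm\Pi,\bm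 I)\mathrm{BlkD}(\bm O_1,\dots,\bm O_{p_Y+1})$, $\bm W_2=\mathrm{BlkD}(\bm O_1^T,\dots,\bm O_{p_Y}^T,\widehat{\bm O}_{p_Y+1}^T)\mathrm{BlkD}(\bm\Pi^T,\bm I)\bm\Sigma_2\bm Q_2^T$, with $\bm\Sigma_l\in\mathbb R^{d_l\times d_{l-1}}$ having top-left block $\mathrm{diag}(\bm\sigma)$ and zeros elsewhere, and $\bm Q_2\in\mathcal O^{d_1}$, $\bm O_k\in\mathcal O^{h_k}$ ($h_k$ the multiplicities of the $p_Y$ distinct positive $y$-values), $\bm O_{p_Y+1}\in\mathcal O^{d_0-r_Y}$, $\widehat{\bm O}_{p_Y+1}\in\mathcal O^{d_2-r_Y}$ arbitrary orthogonal matrices. Distances/gradient norms are Frobenius norms on tuples. *)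

theory Defs
  imports "HOL-Analysis.Analysis"
begin

text \<open>Matrices are typed: an m x n real matrix with row index type 'm and column index type 'n
  is real^'n^'m.  Index types 'a, 'b, 'c have cardinalities d0, d1, d2.  Fixed bijections
  e :: index \<Rightarrow> nat onto {..<card} identify positions (0-based).  The HOL-Analysis norm on
  real^'n^'m is the Frobenius norm, and the product norm on pairs is the Frobenius norm on tuples.\<close>

definition rankY :: "nat \<Rightarrow> (nat \<Rightarrow> real) \<Rightarrow> nat" where
  "rankY n y = card {i. i < n \<and> 0 < y i}"

definition Aset :: "nat \<Rightarrow> real \<Rightarrow> (nat \<Rightarrow> real) \<Rightarrow> real list set" where
  "Aset n lam y = {a. length a = n \<and>
     (\<forall>i<n. (a!i)^3 - sqrt lam * y i * (a!i) + lam * (a!i) = 0 \<and> 0 \<le> a!i)}"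

definition Ymat :: "('a::finite \<Rightarrow> nat) \<Rightarrow> ('c::finite \<Rightarrow> nat) \<Rightarrow> (nat \<Rightarrow> real) \<Rightarrow> real^'a^'c" where
  "Ymat e0 e2 y = (\<chi> c a. if e2 c = e0 a \<and> e0 a < min CARD('a) CARD('c) then y (e0 a) else 0)"

definition lossG :: "real \<Rightarrow> real^'a::finite^'c::finite \<Rightarrow> ((real^'a^'b::finite) \<times> (real^'b^'c)) \<Rightarrow> real" where
  "lossG lam Y W = (norm (snd W ** fst W - sqrt lam *\<^sub>R Y))^2
                   + lam * ((norm (fst W))^2 + (norm (snd W))^2)"

definition grad :: "('v::real_inner \<Rightarrow> real) \<Rightarrow> 'v \<Rightarrow> 'v" where
  "grad f x = (THE g. (f has_derivative (\<lambda>h. g \<bullet> h)) (at x))"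

definition Sig1 :: "('a::finite \<Rightarrow> nat) \<Rightarrow> ('b::finite \<Rightarrow> nat) \<Rightarrow> real list \<Rightarrow> real^'a^'b" where
  "Sig1 e0 e1 s = (\<chi> b a. if e1 b = e0 a \<and> e0 a < length s then s!(e0 a) else 0)"

definition Sig2 :: "('b::finite \<Rightarrow> nat) \<Rightarrow> ('c::finite \<Rightarrow> nat) \<Rightarrow> real list \<Rightarrow> real^'b^'c" where
  "Sig2 e1 e2 s = (\<chi> c b. if e2 c = e1 b \<and> e1 b < length s then s!(e1 b) else 0)"

definition PiBlk :: "('i::finite \<Rightarrow> nat) \<Rightarrow> nat \<Rightarrow> (nat \<Rightarrow> nat) \<Rightarrow> real^'i^'i" where
  "PiBlk e n p = (\<chi> i j. if e i < n \<and> e j < n then (if e i = p (e j) then 1 else 0)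
                        else (if i = j then 1 else 0))"

text \<open>Group key: positions k < r_Y are grouped by equal value y k (the blocks of the
  multiplicities h_k); all positions >= r_Y form the last group.\<close>
definition gkey :: "(nat \<Rightarrow> real) \<Rightarrow> nat \<Rightarrow> nat \<Rightarrow> real" where
  "gkey y r k = (if k < r then y k else 0)"

text \<open>BlkD(O_1,...,O_{p_Y},O_{p_Y+1}) with arbitrary orthogonal blocks = orthogonal matrices
  vanishing outside the diagonal blocks.\<close>
definition blk_ok :: "('i::finite \<Rightarrow> nat) \<Rightarrow> (nat \<Rightarrow> real) \<Rightarrow> nat \<Rightarrow> real^'i^'i \<Rightarrow> bool" where
  "blk_ok e y r U \<longleftrightarrow> orthogonal_matrix U \<and>
     (\<forall>i j. gkey y r (e i) \<noteq> gkey y r (e j) \<longrightarrow> U$i$j = 0)"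

definition Wset :: "('a::finite \<Rightarrow> nat) \<Rightarrow> ('b::finite \<Rightarrow> nat) \<Rightarrow> ('c::finite \<Rightarrow> nat)
    \<Rightarrow> real \<Rightarrow> (nat \<Rightarrow> real) \<Rightarrow> real list \<Rightarrow> ((real^'a^'b) \<times> (real^'b^'c)) set" where
  "Wset e0 e1 e2 lam y s =
    (let n = min CARD('a) CARD('c); r = rankY n y in
     {(W1, W2). \<exists>a p Q U V.
        a \<in> Aset n lam y \<and> p permutes {..<n} \<and> (\<forall>j<n. s!(p j) = a!j) \<and>
        orthogonal_matrix Q \<and> blk_ok e0 y r U \<and> blk_ok e2 y r V \<and>
        (\<forall>i j i' j'. e2 i = e0 i' \<longrightarrow> e2 j = e0 j' \<longrightarrow> e0 i' < r \<longrightarrow> e0 j' < r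
            \<longrightarrow> V$i$j = U$j'$i') \<and>
        W1 = Q ** Sig1 e0 e1 s ** PiBlk e0 n p ** U \<and>
        W2 = V ** transpose (PiBlk e2 n p) ** Sig2 e1 e2 s ** transpose Q})"

definition hatW :: "('a::finite \<Rightarrow> nat) \<Rightarrow> ('b::finite \<Rightarrow> nat) \<Rightarrow> ('c::finite \<Rightarrow> nat)
    \<Rightarrow> real \<Rightarrow> (nat \<Rightarrow> real) \<Rightarrow> real list \<Rightarrow> ((real^'a^'b) \<times> (real^'b^'c)) set" where
  "hatW e0 e1 e2 lam y s = Wset e0 e1 e2 lam y (rev (sort s))"

end

theory Submission
  imports Defs
begin


lemma grad_eq:
  fixes f :: "'v::real_inner \<Rightarrow> real"
  assumes "(f has_derivative (\<lambda>h. g \<bullet> h)) (at x)"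
  shows "grad f x = g"
  unfolding grad_def
proof (rule the_equality)
  show "(f has_derivative (\<lambda>h. g \<bullet> h)) (at x)" by fact
next
  fix g' assume "(f has_derivative (\<lambda>h. g' \<bullet> h)) (at x)"
  from has_derivative_unique[OF this assms] have "(\<lambda>h. g' \<bullet> h) = (\<lambda>h. g \<bullet> h)" .
  then have "g' \<bullet> (g' - g) = g \<bullet> (g' - g)" by metis
  then have "(g' - g) \<bullet> (g' - g) = 0" by (simp add: inner_diff_left)
  then show "g' = g" by simp
qed

lemma bilinear_mm: "bilinear (\<lambda>(A::real^'n^'m) (B::real^'k^'n). A ** B)"
  unfolding bilinear_def linear_iff
  by (auto simp: matrix_add_ldistrib; vector matrix_matrix_mult_def sum.distrib sum_distrib_left field_simps)

lemma bb_mm: "bounded_bilinear (\<lambda>(A::real^'n^'m) (B::real^'k^'n). A ** B)"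
  using bilinear_mm bilinear_conv_bounded_bilinear by blast

lemma inner_mm_left: "(R::real^'k^'m) \<bullet> ((A::real^'n^'m) ** B) = (transpose A ** R) \<bullet> B"
proof -
  have "R \<bullet> (A ** B) = (\<Sum>i\<in>UNIV. \<Sum>j\<in>UNIV. \<Sum>k\<in>UNIV. R$i$j * A$i$k * B$k$j)"
    unfolding inner_vec_def matrix_matrix_mult_def
    by (simp add: inner_real_def sum_distrib_left mult.assoc)
  also have "\<dots> = (\<Sum>i\<in>UNIV. \<Sum>k\<in>UNIV. \<Sum>j\<in>UNIV. R$i$j * A$i$k * B$k$j)"
    by (rule sum.cong[OF refl], rule sum.swap)
  also have "\<dots> = (\<Sum>k\<in>UNIV. \<Sum>i\<in>UNIV. \<Sum>j\<in>UNIV. R$i$j * A$i$k * B$k$j)"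
    by (rule sum.swap)
  also have "\<dots> = (\<Sum>k\<in>UNIV. \<Sum>j\<in>UNIV. \<Sum>i\<in>UNIV. R$i$j * A$i$k * B$k$j)"
    by (rule sum.cong[OF refl], rule sum.swap)
  also have "\<dots> = (transpose A ** R) \<bullet> B"
    unfolding inner_vec_def matrix_matrix_mult_def transpose_def
    by (simp add: inner_real_def sum_distrib_left sum_distrib_right mult_ac)
  finally show ?thesis .
qed

lemma inner_mm_right: "(R::real^'k^'m) \<bullet> ((A::real^'n^'m) ** B) = (R ** transpose B) \<bullet> A"
proof -
  have "R \<bullet> (A ** B) = (\<Sum>i\<in>UNIV. \<Sum>j\<in>UNIV. \<Sum>k\<in>UNIV. R$i$j * A$i$k * B$k$j)"
    unfolding inner_vec_def matrix_matrix_mult_def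
    by (simp add: inner_real_def sum_distrib_left mult.assoc)
  also have "\<dots> = (\<Sum>i\<in>UNIV. \<Sum>k\<in>UNIV. \<Sum>j\<in>UNIV. R$i$j * A$i$k * B$k$j)"
    by (rule sum.cong[OF refl], rule sum.swap)
  also have "\<dots> = (R ** transpose B) \<bullet> A"
    unfolding inner_vec_def matrix_matrix_mult_def transpose_def
    by (simp add: inner_real_def sum_distrib_left sum_distrib_right mult_ac)
  finally show ?thesis .
qed

lemma lossG_deriv:
  fixes lam :: real and Y :: "real^'a::finite^'c::finite" and W :: "(real^'a^'b::finite) \<times> (real^'b^'c)"
  defines "R \<equiv> snd W ** fst W - sqrt lam *\<^sub>R Y"
  shows "(lossG lam Y has_derivative (\<lambda>h. (2 *\<^sub>R (transpose (snd W) ** R) + (2*lam) *\<^sub>R fst W,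
            2 *\<^sub>R (R ** transpose (fst W)) + (2*lam) *\<^sub>R snd W) \<bullet> h)) (at W)"
proof -
  have d1: "((\<lambda>W::(real^'a^'b) \<times> (real^'b^'c). snd W ** fst W) has_derivative
        (\<lambda>h. snd W ** fst h + snd h ** fst W)) (at W)"
    using bounded_bilinear.FDERIV[OF bb_mm, OF has_derivative_snd[OF has_derivative_ident] has_derivative_fst[OF has_derivative_ident]]
    by blast
  have dR: "((\<lambda>W::(real^'a^'b) \<times> (real^'b^'c). snd W ** fst W - sqrt lam *\<^sub>R Y) has_derivative
        (\<lambda>h. snd W ** fst h + snd h ** fst W)) (at W)"
    using has_derivative_diff[OF d1 has_derivative_const] by simp
  have eq: "lossG lam Y = (\<lambda>W. (snd W ** fst W - sqrt lam *\<^sub>R Y) \<bullet> (snd W ** fst W - sqrt lam *\<^sub>R Y)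
      + lam * (fst W \<bullet> fst W + snd W \<bullet> snd W))"
    by (auto simp: lossG_def power2_norm_eq_inner)
  have f: "((\<lambda>W::(real^'a^'b) \<times> (real^'b^'c). fst W) has_derivative fst) (at W)"
    using has_derivative_fst[OF has_derivative_ident] by blast
  have s: "((\<lambda>W::(real^'a^'b) \<times> (real^'b^'c). snd W) has_derivative snd) (at W)"
    using has_derivative_snd[OF has_derivative_ident] by blast
  have all: "(lossG lam Y has_derivative (\<lambda>h. (R \<bullet> (snd W ** fst h + snd h ** fst W) + (snd W ** fst h + snd h ** fst W) \<bullet> R)
      + lam * ((fst W \<bullet> fst h + fst h \<bullet> fst W) + (snd W \<bullet> snd h + snd h \<bullet> snd W)))) (at W)"
    unfolding eq R_def
    by (intro has_derivative_add has_derivative_inner dR f s has_derivative_mult_right)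
  show ?thesis
    apply (rule has_derivative_eq_rhs[OF all])
  proof (rule ext)
    fix h :: "(real^'a^'b) \<times> (real^'b^'c)"
    have 1: "(snd W ** fst h + snd h ** fst W) \<bullet> R = R \<bullet> (snd W ** fst h + snd h ** fst W)"
      by (rule inner_commute)
    have 2: "R \<bullet> (snd W ** fst h + snd h ** fst W) = (transpose (snd W) ** R) \<bullet> fst h + (R ** transpose (fst W)) \<bullet> snd h"
    proof -
      have a: "R \<bullet> (snd W ** fst h) = (transpose (snd W) ** R) \<bullet> fst h" by (rule inner_mm_left)
      have b: "R \<bullet> (snd h ** fst W) = (R ** transpose (fst W)) \<bullet> snd h" by (rule inner_mm_right)
      show ?thesis by (simp only: inner_add_right a b)
    qed
    have 3: "fst h \<bullet> fst W = fst W \<bullet> fst h" "snd h \<bullet> snd W = snd W \<bullet> snd h" by (simp_all only: inner_commute)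
    show "(R \<bullet> (snd W ** fst h + snd h ** fst W) + (snd W ** fst h + snd h ** fst W) \<bullet> R)
      + lam * ((fst W \<bullet> fst h + fst h \<bullet> fst W) + (snd W \<bullet> snd h + snd h \<bullet> snd W)) =
      (2 *\<^sub>R (transpose (snd W) ** R) + (2*lam) *\<^sub>R fst W,
            2 *\<^sub>R (R ** transpose (fst W)) + (2*lam) *\<^sub>R snd W) \<bullet> h"
      unfolding 1 2 3 by (cases h) (simp add: inner_Pair inner_add_left algebra_simps)
  qed
qed


lemma kernel_exists:
  fixes A :: "real^'n^'m" and d :: "'n set"
  assumes "rank A < card d"
  shows "\<exists>x. x \<noteq> 0 \<and> (\<forall>i. i \<notin> d \<longrightarrow> x$i = 0) \<and> A *v x = 0"
proof (rule ccontr)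
  assume H: "\<not> ?thesis"
  define T where "T = {x::real^'n. \<forall>i. i \<notin> d \<longrightarrow> x$i = 0}"
  have sub: "subspace T" unfolding T_def subspace_def by auto
  have inj: "inj_on ((*v) A) (span T)"
  proof (rule inj_onI)
    fix x y assume "x \<in> span T" "y \<in> span T" "A *v x = A *v y"
    moreover have "span T = T" using sub by (simp add: span_eq_iff)
    ultimately have "x \<in> T" "y \<in> T" by auto
    then have "x - y \<in> T" using sub by (simp add: subspace_diff)
    moreover have "A *v (x - y) = 0" using \<open>A *v x = A *v y\<close> by (simp add: matrix_vector_mult_diff_distrib)
    ultimately have "x - y \<in> T" "A *v (x - y) = 0" by auto
    moreover have "\<not> (x - y \<noteq> 0 \<and> (\<forall>i. i \<notin> d \<longrightarrow> (x - y)$i = 0) \<and> A *v (x - y) = 0)"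
      using H by blast
    ultimately have "x - y = 0" unfolding T_def by blast
    then show "x = y" by simp
  qed
  have "dim ((*v) A ` T) = dim T"
    using dim_image_eq[OF matrix_vector_mul_linear inj] .
  also have "dim T = card d" using dim_substandard_cart[where 'a=real and 'n='n, of d] dim_vec_eq[of T] unfolding T_def by argo
  finally have "card d = dim ((*v) A ` T)" by simp
  also have "\<dots> \<le> rank A" unfolding rank_dim_range by (rule dim_subset) auto
  finally show False using assms by simp
qed


definition Dm :: "('i::finite \<Rightarrow> nat) \<Rightarrow> ('j::finite \<Rightarrow> nat) \<Rightarrow> (nat \<Rightarrow> real) \<Rightarrow> nat \<Rightarrow> real^'j^'i" where
  "Dm ei ej f n = (\<chi> i j. if ei i = ej j \<and> ej j < n then f (ej j) else 0)"

lemma Sig1_Dm: "Sig1 e0 e1 x = Dm e1 e0 (nth x) (length x)"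
  unfolding Sig1_def Dm_def by simp
lemma Sig2_Dm: "Sig2 e1 e2 x = Dm e2 e1 (nth x) (length x)"
  unfolding Sig2_def Dm_def by simp
lemma Ymat_Dm:
  fixes e0 :: "'a::finite \<Rightarrow> nat" and e2 :: "'c::finite \<Rightarrow> nat"
  shows "Ymat e0 e2 y = Dm e2 e0 y (min CARD('a::finite) CARD('c::finite))"
  unfolding Ymat_def Dm_def by simp
lemma Dm_transpose: "transpose (Dm ei ej f n) = Dm ej ei f n"
  unfolding Dm_def transpose_def by (rule vec_eq_iff[THEN iffD2], auto simp: vec_eq_iff)
lemma Dm_add: "Dm ei ej f n + Dm ei ej g n = Dm ei ej (\<lambda>k. f k + g k) n"
  unfolding Dm_def by (auto simp: vec_eq_iff)
lemma Dm_diff: "Dm ei ej f n - Dm ei ej g n = Dm ei ej (\<lambda>k. f k - g k) n"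
  unfolding Dm_def by (auto simp: vec_eq_iff)
lemma Dm_scale: "c *\<^sub>R Dm ei ej f n = Dm ei ej (\<lambda>k. c * f k) n"
  unfolding Dm_def by (auto simp: vec_eq_iff)
lemma Dm_cong: "(\<And>k. k < n \<Longrightarrow> f k = g k) \<Longrightarrow> Dm ei ej f n = Dm ei ej g n"
  unfolding Dm_def by (auto simp: vec_eq_iff)

lemma Dm_mult:
  fixes ei :: "'i::finite \<Rightarrow> nat" and ek :: "'k::finite \<Rightarrow> nat" and ej :: "'j::finite \<Rightarrow> nat"
  assumes bij: "bij_betw ek UNIV {..<CARD('k)}" and nle: "n \<le> CARD('k)"
  shows "Dm ei ek f n ** Dm ek ej g n = Dm ei ej (\<lambda>k. f k * g k) n"
proof -
  have "(\<Sum>k\<in>UNIV. (if ei i = ek k \<and> ek k < n then f (ek k) else 0) *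
            (if ek k = ej j \<and> ej j < n then g (ej j) else 0)) =
        (if ei i = ej j \<and> ej j < n then f (ej j) * g (ej j) else 0)" for i j
  proof (cases "ei i = ej j \<and> ej j < n")
    case T0: True
    then have "ej j \<in> {..<CARD('k)}" using nle by auto
    then obtain k0 where k0: "ek k0 = ej j" using bij unfolding bij_betw_def by (metis imageE)
    have inj: "inj ek" using bij bij_betw_def by blast
    have "(\<Sum>k\<in>UNIV. (if ei i = ek k \<and> ek k < n then f (ek k) else 0) *
            (if ek k = ej j \<and> ej j < n then g (ej j) else 0)) =
          (\<Sum>k\<in>UNIV. if k = k0 then f (ej j) * g (ej j) else 0)"
    proof (rule sum.cong[OF refl])
      fix k show "(if ei i = ek k \<and> ek k < n then f (ek k) else 0) *
            (if ek k = ej j \<and> ej j < n then g (ej j) else 0) = (if k = k0 then f (ej j) * g (ej j) else 0)"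
      proof (cases "k = k0")
        case True then show ?thesis using T0 k0 by simp
      next
        case False then have "ek k \<noteq> ej j" using k0 inj unfolding inj_def by metis
        then show ?thesis using False by simp
      qed
    qed
    also have "\<dots> = f (ej j) * g (ej j)" by simp
    finally show ?thesis using T0 by simp
  next
    case False
    then have "\<forall>k\<in>UNIV. (if ei i = ek k \<and> ek k < n then f (ek k) else 0) *
            (if ek k = ej j \<and> ej j < n then g (ej j) else 0) = 0" by auto
    then show ?thesis using False by (simp only: sum.neutral) simp
  qed
  then show ?thesis unfolding Dm_def matrix_matrix_mult_def by (simp add: vec_eq_iff)
qed



lemma grad_Dm:
  fixes e0 :: "'a::finite \<Rightarrow> nat" and e1 :: "'b::finite \<Rightarrow> nat" and e2 :: "'c::finite \<Rightarrow> nat"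
  assumes b0: "bij_betw e0 UNIV {..<CARD('a)}"
    and b1: "bij_betw e1 UNIV {..<CARD('b)}"
    and b2: "bij_betw e2 UNIV {..<CARD('c)}"
    and n: "n = min CARD('a) CARD('c)" and nb: "n \<le> CARD('b)"
  shows "grad (lossG lam (Ymat e0 e2 y)) (Dm e1 e0 x n, Dm e2 e1 x n) =
    (Dm e1 e0 (\<lambda>k. 2 * (x k * (x k * x k - sqrt lam * y k)) + 2 * lam * x k) n,
     Dm e2 e1 (\<lambda>k. 2 * ((x k * x k - sqrt lam * y k) * x k) + 2 * lam * x k) n)"
proof -
  have na: "n \<le> CARD('a)" and nc: "n \<le> CARD('c)" using n by auto
  let ?W = "(Dm e1 e0 x n, Dm e2 e1 x n) :: (real^'a^'b) \<times> (real^'b^'c)"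
  let ?R = "snd ?W ** fst ?W - sqrt lam *\<^sub>R Ymat e0 e2 y"
  have R: "?R = Dm e2 e0 (\<lambda>k. x k * x k - sqrt lam * y k) n"
    by (simp add: Dm_mult[OF b1 nb] Ymat_Dm n[symmetric] Dm_scale Dm_diff)
  have g1: "transpose (snd ?W) ** ?R = Dm e1 e0 (\<lambda>k. x k * (x k * x k - sqrt lam * y k)) n"
    unfolding R by (simp add: Dm_transpose Dm_mult[OF b2 nc])
  have g2: "?R ** transpose (fst ?W) = Dm e2 e1 (\<lambda>k. (x k * x k - sqrt lam * y k) * x k) n"
    unfolding R by (simp add: Dm_transpose Dm_mult[OF b0 na])
  show ?thesis
    apply (rule grad_eq)
    using lossG_deriv[of lam "Ymat e0 e2 y" ?W]
    unfolding g1 g2 by (simp add: Dm_scale Dm_add)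
qed



definition cP :: "('i::finite \<Rightarrow> nat) \<Rightarrow> nat \<Rightarrow> (nat \<Rightarrow> nat) \<Rightarrow> 'i \<Rightarrow> 'i" where
  "cP e n p i = (if e i < n then inv e (p (e i)) else i)"

context
  fixes e :: "'i::finite \<Rightarrow> nat" and n :: nat and p :: "nat \<Rightarrow> nat"
  assumes be: "bij_betw e UNIV {..<CARD('i)}" and nle: "n \<le> CARD('i)" and pp: "p permutes {..<n}"
begin

lemma e_cP: "e (cP e n p i) = (if e i < n then p (e i) else e i)"
proof (cases "e i < n")
  case True
  then have "p (e i) < n" using pp permutes_in_image by fastforce
  then have "p (e i) \<in> range e" using be nle unfolding bij_betw_def by auto
  then show ?thesis using True unfolding cP_def by (simp add: f_inv_into_f)
qed (simp add: cP_def)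

lemma inj_e: "inj e" using be bij_betw_def by blast

lemma PiBlk_entry: "PiBlk e n p $ k $ i = (if k = cP e n p i then 1 else 0)"
proof -
  have kc: "k = cP e n p i \<longleftrightarrow> e k = e (cP e n p i)" using inj_e by (auto dest: injD)
  show ?thesis
  proof (cases "e i < n")
    case True
    then have pl: "p (e i) < n" using pp permutes_in_image by fastforce
    have ec: "e (cP e n p i) = p (e i)" using True e_cP by simp
    show ?thesis
    proof (cases "e k < n")
      case True
      then show ?thesis using \<open>e i < n\<close> kc ec unfolding PiBlk_def by simp
    next
      case False
      then have "k \<noteq> i" using \<open>e i < n\<close> by auto
      moreover have "e k \<noteq> p (e i)" using False pl by auto
      ultimately show ?thesis using False kc ec unfolding PiBlk_def by simp
    qed
  next
    case False
    then show ?thesis unfolding PiBlk_def cP_def by simp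
  qed
qed

lemma mult_PiBlk: "(A ** PiBlk e n p) $ i $ j = A $ i $ (cP e n p j)"
proof -
  have "\<And>k. A$i$k * PiBlk e n p $ k $ j = (if k = cP e n p j then A$i$k else 0)"
    by (simp add: PiBlk_entry)
  then show ?thesis unfolding matrix_matrix_mult_def by simp
qed

lemma tPiBlk_mult: "(transpose (PiBlk e n p) ** A) $ i $ j = A $ (cP e n p i) $ j"
proof -
  have "\<And>k. transpose (PiBlk e n p)$i$k * A $ k $ j = (if k = cP e n p i then A$k$j else 0)"
    by (simp add: PiBlk_entry transpose_def)
  then show ?thesis unfolding matrix_matrix_mult_def by simp
qed

lemma cP_inj: "cP e n p i = cP e n p j \<Longrightarrow> i = j"
proof -
  assume "cP e n p i = cP e n p j"
  then have "e (cP e n p i) = e (cP e n p j)" by simp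
  moreover have pin: "x < n \<Longrightarrow> p x < n" for x using permutes_in_image[OF pp] by simp
  moreover have "p x = p y \<Longrightarrow> x = y" for x y using permutes_inj[OF pp] unfolding inj_def by blast
  ultimately have "e i = e j" unfolding e_cP
    by (cases "e i < n"; cases "e j < n") (auto dest: pin)
  then show "i = j" using inj_e by (auto dest: injD)
qed

lemma PiBlk_orth: "orthogonal_matrix (PiBlk e n p)"
  unfolding orthogonal_matrix
  by (simp add: vec_eq_iff tPiBlk_mult PiBlk_entry mat_def cP_inj)

end


lemma orth_transpose: "orthogonal_matrix A \<Longrightarrow> orthogonal_matrix (transpose A)"
  unfolding orthogonal_matrix_def by simp

lemma member_hatW:
  fixes e0 :: "'a::finite \<Rightarrow> nat" and e1 :: "'b::finite \<Rightarrow> nat" and e2 :: "'c::finite \<Rightarrow> nat"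
  assumes b0: "bij_betw e0 UNIV {..<CARD('a)}"
    and b1: "bij_betw e1 UNIV {..<CARD('b)}"
    and b2: "bij_betw e2 UNIV {..<CARD('c)}"
    and n: "n = min CARD('a) CARD('c)" and nb: "n \<le> CARD('b)"
    and sA: "s \<in> Aset n lam y"
  shows "(Dm e1 e0 (nth s) n, Dm e2 e1 (nth s) n) \<in> hatW e0 e1 e2 lam y s"
proof -
  have na: "n \<le> CARD('a)" and nc: "n \<le> CARD('c)" using n by auto
  define \<sigma> where "\<sigma> = rev (sort s)"
  have ls: "length s = n" using sA by (simp add: Aset_def)
  have "mset s = mset \<sigma>" by (simp add: \<sigma>_def)
  then obtain p where pp0: "p permutes {..<length \<sigma>}" and pl: "permute_list p \<sigma> = s"
    by (rule mset_eq_permutation)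
  have lsig: "length \<sigma> = n" using ls by (simp add: \<sigma>_def)
  have pp: "p permutes {..<n}" using pp0 lsig by simp
  have snth: "j < n \<Longrightarrow> s ! j = \<sigma> ! (p j)" for j
    using permute_list_nth[OF pp0, of j] pl lsig by simp
  have pin: "j < n \<Longrightarrow> p j < n" for j using permutes_in_image[OF pp] by simp
  have pin': "j < length \<sigma> \<Longrightarrow> p j < length \<sigma>" for j using pin lsig by simp
  have pinj: "p i = p j \<Longrightarrow> i = j" for i j using permutes_inj[OF pp] by (auto dest: injD)
  have inj0: "inj e0" and inj1: "inj e1" and inj2: "inj e2" using b0 b1 b2 bij_betw_def by blast+
  define P0 where "P0 = PiBlk e0 n p"
  define P1 where "P1 = PiBlk e1 n p"
  define P2 where "P2 = PiBlk e2 n p"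
  note e0c = e_cP[OF b0 na pp] and e1c = e_cP[OF b1 nb pp] and e2c = e_cP[OF b2 nc pp]
  have W1: "Dm e1 e0 (nth s) n = transpose P1 ** Sig1 e0 e1 \<sigma> ** P0 ** mat 1"
  proof -
    have "(transpose P1 ** Sig1 e0 e1 \<sigma> ** P0) $ b $ a = Dm e1 e0 (nth s) n $ b $ a" for b a
    proof -
      have "(transpose P1 ** Sig1 e0 e1 \<sigma> ** P0) $ b $ a = Sig1 e0 e1 \<sigma> $ (cP e1 n p b) $ (cP e0 n p a)"
        unfolding P0_def P1_def mult_PiBlk[OF b0 na pp] tPiBlk_mult[OF b1 nb pp] ..
      also have "\<dots> = Dm e1 e0 (nth s) n $ b $ a"
        unfolding Sig1_def Dm_def using e0c[of a] e1c[of b] lsig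
        by (auto simp: snth pin pin' dest: pinj injD[OF inj0] injD[OF inj1])
      finally show ?thesis .
    qed
    then show ?thesis by (simp add: vec_eq_iff)
  qed
  have W2: "Dm e2 e1 (nth s) n = mat 1 ** transpose P2 ** Sig2 e1 e2 \<sigma> ** transpose (transpose P1)"
  proof -
    have "(transpose P2 ** Sig2 e1 e2 \<sigma> ** P1) $ c $ b = Dm e2 e1 (nth s) n $ c $ b" for c b
    proof -
      have "(transpose P2 ** Sig2 e1 e2 \<sigma> ** P1) $ c $ b = Sig2 e1 e2 \<sigma> $ (cP e2 n p c) $ (cP e1 n p b)"
        unfolding P2_def P1_def mult_PiBlk[OF b1 nb pp] tPiBlk_mult[OF b2 nc pp] ..
      also have "\<dots> = Dm e2 e1 (nth s) n $ c $ b"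
        unfolding Sig2_def Dm_def using e2c[of c] e1c[of b] lsig
        by (auto simp: snth pin pin' dest: pinj injD[OF inj2] injD[OF inj1])
      finally show ?thesis .
    qed
    then show ?thesis by (simp add: vec_eq_iff)
  qed
  have blk: "blk_ok e y r (mat 1)" if "inj e" for e :: "'i::finite \<Rightarrow> nat" and r
    unfolding blk_ok_def using that by (intro conjI orthogonal_matrix_id) (auto simp: mat_def)
  have UV: "\<forall>i j i' j'. e2 i = e0 i' \<longrightarrow> e2 j = e0 j' \<longrightarrow> e0 i' < r \<longrightarrow> e0 j' < r
            \<longrightarrow> (mat 1 :: real^'c^'c)$i$j = (mat 1 :: real^'a^'a)$j'$i'" for r
    using inj0 inj2 unfolding mat_def inj_def by auto
  show ?thesis
    unfolding hatW_def Wset_def Let_def n[symmetric] \<sigma>_def[symmetric]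
    apply (simp only: mem_Collect_eq case_prod_conv)
    apply (rule exI[of _ s], rule exI[of _ p], rule exI[of _ "transpose P1"], rule exI[of _ "mat 1"], rule exI[of _ "mat 1"])
    using sA pp lsig snth orth_transpose[OF PiBlk_orth[OF b1 nb pp]] blk[OF inj0] blk[OF inj2] UV W1 W2
    unfolding P1_def P0_def P2_def by auto
qed



lemma norm_mv_sq: "(norm (v::real^'m))\<^sup>2 = (\<Sum>i\<in>UNIV. (v$i)\<^sup>2)"
  unfolding power2_norm_eq_inner inner_vec_def by (simp add: power2_eq_square)

lemma norm_mat_sq: "(norm (A::real^'n^'m))\<^sup>2 = (\<Sum>i\<in>UNIV. (norm (A$i))\<^sup>2)"
  by (simp add: power2_norm_eq_inner inner_vec_def)

lemma norm_mult_vec_le: "norm ((A::real^'n^'m) *v x) \<le> norm A * norm x"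
proof (rule power2_le_imp_le)
  have "(norm (A *v x))\<^sup>2 = (\<Sum>i\<in>UNIV. (A$i \<bullet> x)\<^sup>2)"
    unfolding norm_mv_sq by (simp add: matrix_mult_dot)
  also have "\<dots> \<le> (\<Sum>i\<in>UNIV. (norm (A$i))\<^sup>2 * (norm x)\<^sup>2)"
  proof (rule sum_mono)
    fix i
    have "\<bar>A$i \<bullet> x\<bar> \<le> norm (A$i) * norm x" by (rule Cauchy_Schwarz_ineq2)
    then have "\<bar>A$i \<bullet> x\<bar>\<^sup>2 \<le> (norm (A$i) * norm x)\<^sup>2"
      by (intro power_mono) auto
    then show "(A$i \<bullet> x)\<^sup>2 \<le> (norm (A$i))\<^sup>2 * (norm x)\<^sup>2" by (simp add: power_mult_distrib)
  qed
  also have "\<dots> = (norm A * norm x)\<^sup>2"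
    by (simp add: norm_mat_sq sum_distrib_right power_mult_distrib)
  finally show "(norm (A *v x))\<^sup>2 \<le> (norm A * norm x)\<^sup>2" .
qed simp

lemma norm_sq_via_transpose: "(norm ((M::real^'n^'m) *v x))\<^sup>2 = x \<bullet> ((transpose M ** M) *v x)"
proof -
  have "(norm (M *v x))\<^sup>2 = (M *v x) \<bullet> (M *v x)" by (simp add: power2_norm_eq_inner)
  also have "\<dots> = ((M *v x) v* M) \<bullet> x" by (simp add: dot_lmul_matrix)
  also have "\<dots> = x \<bullet> (transpose M *v (M *v x))"
    by (metis inner_commute vector_transpose_matrix transpose_transpose)
  also have "\<dots> = x \<bullet> ((transpose M ** M) *v x)" by (simp add: matrix_vector_mul_assoc)
  finally show ?thesis .
qed

lemma Dm_diag_mv: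
  fixes e0 :: "'a::finite \<Rightarrow> nat"
  assumes inj: "inj e0"
  shows "(Dm e0 e0 h n *v x) $ a = (if e0 a < n then h (e0 a) * x $ a else 0)"
proof -
  have "\<And>a'. (if e0 a = e0 a' \<and> e0 a' < n then h (e0 a') else 0) * x $ a' =
       (if a' = a then (if e0 a < n then h (e0 a) * x $ a else 0) else 0)"
    using inj unfolding inj_def by auto
  then show ?thesis unfolding Dm_def matrix_vector_mult_def by simp
qed

lemma Dm_lower:
  fixes e0 :: "'a::finite \<Rightarrow> nat" and e1 :: "'b::finite \<Rightarrow> nat"
  assumes b0: "inj e0" and b1: "bij_betw e1 UNIV {..<CARD('b)}" and nb: "n \<le> CARD('b)"
    and t: "\<And>a. x $ a \<noteq> 0 \<Longrightarrow> e0 a < n \<and> t\<^sup>2 \<le> (h (e0 a))\<^sup>2"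
  shows "t\<^sup>2 * (norm x)\<^sup>2 \<le> (norm (Dm e1 e0 h n *v x))\<^sup>2"
proof -
  have "transpose (Dm e1 e0 h n) ** Dm e1 e0 h n = Dm e0 e0 (\<lambda>k. h k * h k) n"
    by (simp add: Dm_transpose Dm_mult[OF b1 nb])
  then have "(norm (Dm e1 e0 h n *v x))\<^sup>2 = (\<Sum>a\<in>UNIV. x $ a * (if e0 a < n then h (e0 a) * h (e0 a) * x $ a else 0))"
    unfolding norm_sq_via_transpose by (simp add: inner_vec_def Dm_diag_mv[OF b0])
  moreover have "t\<^sup>2 * (norm x)\<^sup>2 = (\<Sum>a\<in>UNIV. t\<^sup>2 * (x $ a)\<^sup>2)"
    by (simp add: norm_mv_sq sum_distrib_left)
  moreover have "t\<^sup>2 * (x $ a)\<^sup>2 \<le> x $ a * (if e0 a < n then h (e0 a) * h (e0 a) * x $ a else 0)" for a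
  proof (cases "x $ a = 0")
    case False
    then have "e0 a < n" "t\<^sup>2 \<le> (h (e0 a))\<^sup>2" using t by auto
    then have "t\<^sup>2 * (x $ a)\<^sup>2 \<le> (h (e0 a))\<^sup>2 * (x $ a)\<^sup>2"
      by (intro mult_right_mono) auto
    then show ?thesis using \<open>e0 a < n\<close> by (simp add: power2_eq_square mult_ac)
  qed simp
  ultimately show ?thesis by (simp add: sum_mono)
qed



lemma rank_Sig1:
  fixes e0 :: "'a::finite \<Rightarrow> nat" and e1 :: "'b::finite \<Rightarrow> nat"
  assumes inj: "inj e0"
  shows "rank (Sig1 e0 e1 \<sigma>) \<le> card {j. j < length \<sigma> \<and> \<sigma>!j \<noteq> 0}"
proof -
  let ?S = "Sig1 e0 e1 \<sigma>"
  define Z where "Z = {a. e0 a < length \<sigma> \<and> \<sigma>!(e0 a) \<noteq> 0}"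
  have "columns ?S \<subseteq> span ((\<lambda>a. column a ?S) ` Z)"
  proof
    fix v assume "v \<in> columns ?S"
    then obtain a where v: "v = column a ?S" unfolding columns_def by auto
    show "v \<in> span ((\<lambda>a. column a ?S) ` Z)"
    proof (cases "a \<in> Z")
      case True then show ?thesis using v by (simp add: span_base)
    next
      case False
      then have "v = 0" unfolding v column_def Sig1_def Z_def by (auto simp: vec_eq_iff)
      then show ?thesis by (simp add: span_zero)
    qed
  qed
  then have "dim (columns ?S) \<le> card ((\<lambda>a. column a ?S) ` Z)"
    by (intro dim_le_card) auto
  also have "\<dots> \<le> card Z" by (rule card_image_le) simp
  also have "\<dots> \<le> card {j. j < length \<sigma> \<and> \<sigma>!j \<noteq> 0}"
    by (rule card_inj_on_le[of e0]) (use inj in \<open>auto simp: Z_def inj_on_def inj_def\<close>)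
  finally show ?thesis by (simp add: column_rank_def)
qed

lemma count_mset:
  assumes "mset xs = mset (ys::real list)"
  shows "card {j. j < length xs \<and> xs!j \<noteq> 0} = card {j. j < length ys \<and> ys!j \<noteq> 0}"
proof -
  have "length (filter (\<lambda>v. v \<noteq> 0) xs) = length (filter (\<lambda>v. v \<noteq> 0) ys)"
    using assms by (metis mset_filter size_mset)
  then show ?thesis by (simp add: length_filter_conv_card)
qed

lemma LB:
  fixes e0 :: "'a::finite \<Rightarrow> nat" and e1 :: "'b::finite \<Rightarrow> nat" and e2 :: "'c::finite \<Rightarrow> nat"
  assumes b0: "bij_betw e0 UNIV {..<CARD('a)}"
    and b1: "bij_betw e1 UNIV {..<CARD('b)}"
    and n: "n = min CARD('a) CARD('c)" and nb: "n \<le> CARD('b)"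
    and sA: "s \<in> Aset n lam y" and k0: "k0 < n" and sk0: "s!k0 = 0" and t0: "0 < t"
    and tle: "\<And>j. j < n \<Longrightarrow> s!j \<noteq> 0 \<Longrightarrow> t \<le> s!j"
    and W: "W \<in> hatW e0 e1 e2 lam y s"
  shows "t \<le> dist (Dm e1 e0 (\<lambda>k. if k = k0 then t else s!k) n, Dm e2 e1 (\<lambda>k. if k = k0 then t else s!k) n) W"
proof -
  define h where "h = (\<lambda>k. if k = k0 then t else s!k)"
  define M where "M = Dm e1 e0 h n"
  have na: "n \<le> CARD('a)" using n by auto
  have inj0: "inj e0" using b0 bij_betw_def by blast
  have ls: "length s = n" using sA by (simp add: Aset_def)
  define \<sigma> where "\<sigma> = rev (sort s)"
  obtain W1 W2 where WW: "W = (W1, W2)" by (cases W)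
  from W obtain a p Q U V where W1: "W1 = Q ** Sig1 e0 e1 \<sigma> ** PiBlk e0 n p ** U"
    unfolding WW hatW_def Wset_def Let_def n[symmetric] \<sigma>_def[symmetric] by auto
  define m where "m = card {j. j < n \<and> s!j \<noteq> 0}"
  have "rank W1 \<le> rank (Sig1 e0 e1 \<sigma>)"
    unfolding W1 by (meson order_trans rank_mul_le_left rank_mul_le_right)
  also have "\<dots> \<le> card {j. j < length \<sigma> \<and> \<sigma>!j \<noteq> 0}" by (rule rank_Sig1[OF inj0])
  also have "\<dots> = m" unfolding m_def using count_mset[of \<sigma> s] ls by (simp add: \<sigma>_def)
  finally have rk: "rank W1 \<le> m" .
  define d where "d = {a. e0 a < n \<and> (s!(e0 a) \<noteq> 0 \<or> e0 a = k0)}"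
  have "e0 ` d = insert k0 {j. j < n \<and> s!j \<noteq> 0}"
  proof
    show "e0 ` d \<subseteq> insert k0 {j. j < n \<and> s!j \<noteq> 0}" unfolding d_def by auto
    show "insert k0 {j. j < n \<and> s!j \<noteq> 0} \<subseteq> e0 ` d"
    proof
      fix j assume j: "j \<in> insert k0 {j. j < n \<and> s!j \<noteq> 0}"
      then have "j < CARD('a)" using k0 na by auto
      then obtain a where "e0 a = j" using b0 unfolding bij_betw_def by (metis imageE lessThan_iff)
      then show "j \<in> e0 ` d" using j k0 unfolding d_def by auto
    qed
  qed
  then have "card d = card (insert k0 {j. j < n \<and> s!j \<noteq> 0})"
    by (metis card_image inj0 inj_on_subset subset_UNIV)
  also have "\<dots> = m + 1" unfolding m_def using sk0 by simp
  finally have cd: "card d = m + 1" .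
  obtain x where x0: "x \<noteq> 0" and xd: "\<forall>i. i \<notin> d \<longrightarrow> x$i = 0" and kx: "W1 *v x = 0"
    using kernel_exists[of W1 d] rk cd by auto
  have "t\<^sup>2 * (norm x)\<^sup>2 \<le> (norm (M *v x))\<^sup>2"
    unfolding M_def
  proof (rule Dm_lower[OF inj0 b1 nb])
    fix a assume "x $ a \<noteq> 0"
    then have "a \<in> d" using xd by auto
    then have ad: "e0 a < n" "s!(e0 a) \<noteq> 0 \<or> e0 a = k0" unfolding d_def by auto
    have "t \<le> h (e0 a)" using ad tle unfolding h_def by auto
    then have "t\<^sup>2 \<le> (h (e0 a))\<^sup>2" using t0 by (intro power_mono) auto
    then show "e0 a < n \<and> t\<^sup>2 \<le> (h (e0 a))\<^sup>2" using ad by auto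
  qed
  then have "t * norm x \<le> norm (M *v x)"
    by (metis norm_ge_zero power_mult_distrib real_le_rsqrt real_sqrt_abs abs_of_nonneg t0 less_imp_le zero_le_mult_iff mult_nonneg_nonneg power2_le_imp_le)
  also have "M *v x = (M - W1) *v x" using kx by (simp add: matrix_vector_mult_diff_rdistrib)
  also have "norm \<dots> \<le> norm (M - W1) * norm x" by (rule norm_mult_vec_le)
  finally have "t \<le> norm (M - W1)" using x0 by simp
  also have "\<dots> = dist M W1" by (simp add: dist_norm)
  also have "\<dots> \<le> dist (M, Dm e2 e1 h n) W" unfolding WW using dist_fst_le[of "(M, Dm e2 e1 h n)" "(W1, W2)"] by simp
  finally show ?thesis unfolding M_def h_def .
qed



theorem lemmaA1:
  fixes e0 :: "'a::finite \<Rightarrow> nat" and e1 :: "'b::finite \<Rightarrow> nat" and e2 :: "'c::finite \<Rightarrow> nat"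
    and y :: "nat \<Rightarrow> real" and lam :: real and s :: "real list"
  assumes "bij_betw e0 UNIV {..<CARD('a)}"
    and "bij_betw e1 UNIV {..<CARD('b)}"
    and "bij_betw e2 UNIV {..<CARD('c)}"
    and "lam > 0"
    and "\<forall>i j. i \<le> j \<and> j < min CARD('a) CARD('c) \<longrightarrow> y j \<le> y i"
    and "\<forall>i < min CARD('a) CARD('c). 0 \<le> y i"
    and "CARD('b) \<ge> min CARD('a) CARD('c)"
    and "\<exists>i < rankY (min CARD('a) CARD('c)) y. lam = (y i)^2"
    and "s \<in> Aset (min CARD('a) CARD('c)) lam y"
  shows "\<not> (\<exists>\<epsilon>>0. \<exists>\<kappa>>0. \<forall>W :: (real^'a^'b) \<times> (real^'b^'c).
            infdist W (hatW e0 e1 e2 lam y s) \<le> \<epsilon> \<longrightarrow>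
            infdist W (hatW e0 e1 e2 lam y s) \<le> \<kappa> * norm (grad (lossG lam (Ymat e0 e2 y)) W))"
proof
  note b0 = assms(1) and b1 = assms(2) and b2 = assms(3)
  define n where "n = min CARD('a) CARD('c)"
  have nb: "n \<le> CARD('b)" using assms(7) n_def by simp
  have sA: "s \<in> Aset n lam y" using assms(9) n_def by simp
  have ls: "length s = n" using sA by (simp add: Aset_def)
  have cub: "\<And>j. j < n \<Longrightarrow> (s!j)^3 - sqrt lam * y j * (s!j) + lam * (s!j) = 0 \<and> 0 \<le> s!j"
    using sA by (simp add: Aset_def)
  obtain i0 where i0r: "i0 < rankY n y" and lamy: "lam = (y i0)^2" using assms(8) n_def by auto
  have "rankY n y \<le> n" unfolding rankY_def
    by (rule order_trans[OF card_mono[of "{..<n}"]]) auto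
  then have i0n: "i0 < n" using i0r by simp
  have yi0: "0 < y i0"
  proof (rule ccontr)
    assume "\<not> 0 < y i0"
    then have "\<And>j. j < n \<Longrightarrow> i0 \<le> j \<Longrightarrow> \<not> 0 < y j" using assms(5) n_def by force
    then have "{i. i < n \<and> 0 < y i} \<subseteq> {..<i0}" by (auto simp: not_le[symmetric])
    then have "rankY n y \<le> i0" unfolding rankY_def by (metis card_lessThan card_mono finite_lessThan)
    then show False using i0r by simp
  qed
  have sq: "sqrt lam = y i0" using lamy yi0 by simp
  have si0: "s!i0 = 0"
  proof -
    have "(s!i0)^3 - sqrt lam * y i0 * (s!i0) + lam * (s!i0) = 0" using cub i0n by blast
    then have "(s!i0)^3 = 0" unfolding lamy using yi0 by (simp add: power2_eq_square)
    then show ?thesis by simp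
  qed
  define h where "h = (\<lambda>t k. if k = i0 then t else s!k)"
  define Wt where "Wt = (\<lambda>t. (Dm e1 e0 (h t) n, Dm e2 e1 (h t) n) :: (real^'a^'b) \<times> (real^'b^'c))"
  define \<delta> where "\<delta> = (\<lambda>k. if k = i0 then (2::real) else 0)"
  define \<delta>1 where "\<delta>1 = (\<lambda>k. if k = i0 then (1::real) else 0)"
  define G0 where "G0 = ((Dm e1 e0 \<delta> n, Dm e2 e1 \<delta> n) :: (real^'a^'b) \<times> (real^'b^'c))"
  define D1 where "D1 = ((Dm e1 e0 \<delta>1 n, Dm e2 e1 \<delta>1 n) :: (real^'a^'b) \<times> (real^'b^'c))"
  define W0 where "W0 = ((Dm e1 e0 (nth s) n, Dm e2 e1 (nth s) n) :: (real^'a^'b) \<times> (real^'b^'c))"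
  have W0in: "W0 \<in> hatW e0 e1 e2 lam y s"
    unfolding W0_def by (rule member_hatW[OF b0 b1 b2 n_def nb sA])
  have gradt: "grad (lossG lam (Ymat e0 e2 y)) (Wt t) = t^3 *\<^sub>R G0" for t
  proof -
    have q1: "Dm e1 e0 (\<lambda>k. 2 * (h t k * (h t k * h t k - sqrt lam * y k)) + 2 * lam * h t k) n
        = Dm e1 e0 (\<lambda>k. t^3 * \<delta> k) n"
    proof (rule Dm_cong)
      fix k assume k: "k < n"
      show "2 * (h t k * (h t k * h t k - sqrt lam * y k)) + 2 * lam * h t k = t^3 * \<delta> k"
      proof (cases "k = i0")
        case True then show ?thesis using yi0 unfolding h_def \<delta>_def lamy
          by (simp add: power2_eq_square power3_eq_cube algebra_simps)
      next
        case False
        have "(s!k)^3 - sqrt lam * y k * (s!k) + lam * (s!k) = 0" using cub k by blast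
        then show ?thesis using False unfolding h_def \<delta>_def
          by (simp add: power3_eq_cube algebra_simps)
      qed
    qed
    have q2: "Dm e2 e1 (\<lambda>k. 2 * ((h t k * h t k - sqrt lam * y k) * h t k) + 2 * lam * h t k) n
        = Dm e2 e1 (\<lambda>k. t^3 * \<delta> k) n"
    proof (rule Dm_cong)
      fix k assume k: "k < n"
      show "2 * ((h t k * h t k - sqrt lam * y k) * h t k) + 2 * lam * h t k = t^3 * \<delta> k"
      proof (cases "k = i0")
        case True then show ?thesis using yi0 unfolding h_def \<delta>_def lamy
          by (simp add: power2_eq_square power3_eq_cube algebra_simps)
      next
        case False
        have "(s!k)^3 - sqrt lam * y k * (s!k) + lam * (s!k) = 0" using cub k by blast
        then show ?thesis using False unfolding h_def \<delta>_def
          by (simp add: power3_eq_cube algebra_simps)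
      qed
    qed
    show ?thesis unfolding Wt_def grad_Dm[OF b0 b1 b2 n_def nb] q1 q2 G0_def
      by (simp add: Dm_scale)
  qed
  have Wt_eq: "Wt t = W0 + t *\<^sub>R D1" for t
  proof -
    have "Dm e1 e0 (h t) n = Dm e1 e0 (\<lambda>k. s!k + t * \<delta>1 k) n"
      "Dm e2 e1 (h t) n = Dm e2 e1 (\<lambda>k. s!k + t * \<delta>1 k) n"
      by (rule Dm_cong, simp add: h_def \<delta>1_def si0)+
    then show ?thesis unfolding Wt_def W0_def D1_def
      by (simp add: Dm_scale Dm_add)
  qed
  define P where "P = {s!j | j. j < n \<and> s!j \<noteq> 0}"
  define \<mu> where "\<mu> = Min (insert 1 P)"
  have finP: "finite P" unfolding P_def by simp
  have \<mu>pos: "0 < \<mu>" unfolding \<mu>_def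
  proof (subst Min_gr_iff)
    show "\<forall>a\<in>insert 1 P. 0 < a" unfolding P_def using cub by fastforce
  qed (use finP in auto)
  have \<mu>le: "\<And>j. j < n \<Longrightarrow> s!j \<noteq> 0 \<Longrightarrow> \<mu> \<le> s!j"
    unfolding \<mu>_def using finP by (intro Min_le) (auto simp: P_def)
  assume "\<exists>\<epsilon>>0. \<exists>\<kappa>>0. \<forall>W :: (real^'a^'b) \<times> (real^'b^'c).
            infdist W (hatW e0 e1 e2 lam y s) \<le> \<epsilon> \<longrightarrow>
            infdist W (hatW e0 e1 e2 lam y s) \<le> \<kappa> * norm (grad (lossG lam (Ymat e0 e2 y)) W)"
  then obtain \<epsilon> \<kappa> where ep: "\<epsilon> > 0" and kp: "\<kappa> > 0" and H: "\<And>W :: (real^'a^'b) \<times> (real^'b^'c).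
            infdist W (hatW e0 e1 e2 lam y s) \<le> \<epsilon> \<Longrightarrow>
            infdist W (hatW e0 e1 e2 lam y s) \<le> \<kappa> * norm (grad (lossG lam (Ymat e0 e2 y)) W)"
    by blast
  define t where "t = min (min \<mu> (1/2)) (min (\<epsilon> / (norm D1 + 1)) (1 / (\<kappa> * (norm G0 + 1))))"
  have n1: "0 < norm D1 + 1" "0 < norm G0 + 1" by (simp_all add: add_nonneg_pos)
  have tpos: "0 < t" unfolding t_def using \<mu>pos ep kp n1 by simp
  have t1: "t \<le> 1/2" and t2: "t \<le> \<mu>" and t3: "t \<le> \<epsilon> / (norm D1 + 1)"
    and t4: "t \<le> 1 / (\<kappa> * (norm G0 + 1))" unfolding t_def
    by (meson min.cobounded1 min.cobounded2 order_trans)+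
  have "t * (norm D1 + 1) \<le> \<epsilon>" using t3 n1 by (simp add: field_simps)
  then have dle: "t * norm D1 \<le> \<epsilon>" using tpos by (simp add: algebra_simps)
  have "infdist (Wt t) (hatW e0 e1 e2 lam y s) \<le> dist (Wt t) W0" by (rule infdist_le[OF W0in])
  also have "\<dots> = t * norm D1" unfolding Wt_eq dist_norm using tpos by simp
  finally have i1: "infdist (Wt t) (hatW e0 e1 e2 lam y s) \<le> \<epsilon>" using dle by linarith
  have "t \<le> infdist (Wt t) (hatW e0 e1 e2 lam y s)"
  proof -
    have tle: "\<And>j. j < n \<Longrightarrow> s!j \<noteq> 0 \<Longrightarrow> t \<le> s!j" using t2 \<mu>le by force
    have ne: "hatW e0 e1 e2 lam y s \<noteq> {}" using W0in by auto
    have "t \<le> (INF W\<in>hatW e0 e1 e2 lam y s. dist (Wt t) W)"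
    proof (rule cINF_greatest)
    show "hatW e0 e1 e2 lam y s \<noteq> {}" using W0in by auto
  next
    fix W assume "W \<in> hatW e0 e1 e2 lam y s"
    then show "t \<le> dist (Wt t) W" unfolding Wt_def h_def
      using LB[OF b0 b1 n_def nb sA i0n si0 tpos tle] by blast
  qed
    then show ?thesis unfolding infdist_def using ne by simp
  qed
  also have "\<dots> \<le> \<kappa> * norm (grad (lossG lam (Ymat e0 e2 y)) (Wt t))" by (rule H[OF i1])
  also have "\<dots> = \<kappa> * t^3 * norm G0" unfolding gradt using tpos by simp
  finally have A: "t \<le> \<kappa> * t^3 * norm G0" .
  have kpos: "0 < \<kappa> * (norm G0 + 1)" using kp n1 by simp
  have "t * (\<kappa> * (norm G0 + 1)) \<le> 1" using t4 kpos by (simp add: le_divide_eq)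
  then have "\<kappa> * t * (norm G0 + 1) \<le> 1" by (simp add: mult_ac)
  moreover have "\<kappa> * t * norm G0 \<le> \<kappa> * t * (norm G0 + 1)" using kp tpos
    by (intro mult_left_mono) auto
  ultimately have k1: "\<kappa> * t * norm G0 \<le> 1" by linarith
  have "\<kappa> * t^3 * norm G0 = (\<kappa> * t * norm G0) * (t * t)" by (simp add: power3_eq_cube mult_ac)
  also have "\<dots> \<le> 1 * (t * t)" using k1 tpos by (intro mult_right_mono) auto
  finally have "\<kappa> * t^3 * norm G0 \<le> t * t" by simp
  also have "t * t < t" using tpos t1 by (simp add: mult_less_cancel_left1 )
  finally show False using A by simp
qed


end
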